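(* Let $G$ be a finite group and let $H,K$ be subgroups of $G$ with $\Pr(H,K)\ge\epsilon>0$. Then there exists a subset $X$ of $H$ such that, for $H_0=\langle X\rangle$: (1) $|H:H_0|\le 2/\epsilon-1$; (2) $|K:C_K(x)|\le 2/\epsilon$ for every $x\in X$; (3) $|K:C_K(x)|\le (2/\epsilon)^{6/\epsilon}$ for every $x\in H_0$.
   Context: For subsets $X,Y$ of a finite group, $\Pr(X,Y)=|\{(x,y)\in X\times Y: xy=yx\}|/(|X||Y|)$. *)

theory Defs
  imports "HOL-Algebra.Algebra"
begin

definition comm_prob :: "('a, 'b) monoid_scheme \<Rightarrow> 'a set \<Rightarrow> 'a set \<Rightarrow> real" where
  "comm_prob G A B =
     real (card {(x, y). x \<in> A \<and> y \<in> B \<and> x \<otimes>\<^bsub>G\<^esub> y = y \<otimes>\<^bsub>G\<^esub> x})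
       / (real (card A) * real (card B))"

definition centralizer_in :: "('a, 'b) monoid_scheme \<Rightarrow> 'a set \<Rightarrow> 'a \<Rightarrow> 'a set" where
  "centralizer_in G K x = {k \<in> K. x \<otimes>\<^bsub>G\<^esub> k = k \<otimes>\<^bsub>G\<^esub> x}"

definition sub_index :: "('a, 'b) monoid_scheme \<Rightarrow> 'a set \<Rightarrow> 'a set \<Rightarrow> nat" where
  "sub_index G H L = card {r_coset G L h | h. h \<in> H}"

end

theory Submission
  imports Defs
begin

definition wprod :: "('a, 'b) monoid_scheme \<Rightarrow> 'a list \<Rightarrow> 'a" where
  "wprod G ws = foldr (\<lambda>a b. a \<otimes>\<^bsub>G\<^esub> b) ws \<one>\<^bsub>G\<^esub>"

lemma (in group) wprod_simps [simp]:
  "wprod G [] = \<one>" "wprod G (a # ws) = a \<otimes> wprod G ws"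
  by (simp_all add: wprod_def)

lemma (in group) wprod_subgroup:
  assumes "subgroup H G" "set ws \<subseteq> H" shows "wprod G ws \<in> H"
  using assms(2) by (induction ws) (auto intro: subgroup.one_closed[OF assms(1)] subgroup.m_closed[OF assms(1)])

lemma (in group) wprod_closed:
  "set ws \<subseteq> carrier G \<Longrightarrow> wprod G ws \<in> carrier G"
  by (induction ws) auto

lemma (in group) wprod_append:
  "set ws \<subseteq> carrier G \<Longrightarrow> set vs \<subseteq> carrier G \<Longrightarrow> wprod G (ws @ vs) = wprod G ws \<otimes> wprod G vs"
  by (induction ws) (auto simp: wprod_closed m_assoc)

lemma (in group) generate_words:
  assumes "Y \<subseteq> carrier G" "\<And>x. x \<in> Y \<Longrightarrow> inv x \<in> Y" "g \<in> generate G Y"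
  shows "\<exists>ws. set ws \<subseteq> Y \<and> g = wprod G ws"
  using assms(3)
proof (induction g rule: generate.induct)
  case one
  then show ?case by (intro exI[of _ "[]"]) simp
next
  case (incl h)
  then show ?case using assms(1) by (intro exI[of _ "[h]"]) auto
next
  case (inv h)
  then show ?case using assms by (intro exI[of _ "[inv h]"]) auto
next
  case (eng h1 h2)
  then obtain ws vs where "set ws \<subseteq> Y" "h1 = wprod G ws" "set vs \<subseteq> Y" "h2 = wprod G vs" by blast
  then show ?case using assms(1) by (intro exI[of _ "ws @ vs"]) (auto simp: wprod_append)
qed

lemma (in group) centralizer_subgroup:
  assumes "subgroup K G" "x \<in> carrier G"
  shows "subgroup (centralizer_in G K x) G"
proof (rule subgroupI)
  have KG: "K \<subseteq> carrier G" using assms(1) subgroup.subset by blast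
  show "centralizer_in G K x \<subseteq> carrier G" using KG by (auto simp: centralizer_in_def)
  show "centralizer_in G K x \<noteq> {}" using assms subgroup.one_closed
    by (fastforce simp: centralizer_in_def)
  fix a b assume a: "a \<in> centralizer_in G K x"
  then have aK: "a \<in> K" and ax: "x \<otimes> a = a \<otimes> x" by (auto simp: centralizer_in_def)
  have ac: "a \<in> carrier G" using aK KG by blast
  have "x \<otimes> inv a = inv a \<otimes> (a \<otimes> x) \<otimes> inv a" using ac assms(2) by (simp add: m_assoc[symmetric])
  also have "\<dots> = inv a \<otimes> x" using ac assms(2) ax[symmetric] by (simp add: m_assoc)
  finally show "inv a \<in> centralizer_in G K x" using aK assms(1)
    by (auto simp: centralizer_in_def subgroup.m_inv_closed)
  assume b: "b \<in> centralizer_in G K x"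
  then have bK: "b \<in> K" and bx: "x \<otimes> b = b \<otimes> x" by (auto simp: centralizer_in_def)
  have bc: "b \<in> carrier G" using bK KG by blast
  have "x \<otimes> (a \<otimes> b) = a \<otimes> (x \<otimes> b)" using ac bc assms(2) ax by (simp add: m_assoc[symmetric])
  also have "\<dots> = (a \<otimes> b) \<otimes> x" using ac bc assms(2) bx by (simp add: m_assoc)
  finally show "a \<otimes> b \<in> centralizer_in G K x" using aK bK assms(1)
    by (auto simp: centralizer_in_def subgroup.m_closed)
qed

lemma (in group) sub_index_mult:
  assumes "subgroup K G" "subgroup L G" "L \<subseteq> K"
  shows "sub_index G K L * card L = card K"
proof -
  interpret KK: group "G\<lparr>carrier := K\<rparr>" using subgroup_imp_group[OF assms(1)] .
  have sL: "subgroup L (G\<lparr>carrier := K\<rparr>)" using subgroup_incl assms by blast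
  have "{r_coset G L h | h. h \<in> K} = rcosets\<^bsub>G\<lparr>carrier := K\<rparr>\<^esub> L"
    by (auto simp: RCOSETS_def r_coset_def)
  then show ?thesis using KK.lagrange[OF sL] unfolding sub_index_def order_def by simp
qed

lemma (in group) rcos_inter:
  assumes "A \<subseteq> carrier G" "B \<subseteq> carrier G" "h \<in> carrier G"
  shows "(A \<inter> B) #> h = (A #> h) \<inter> (B #> h)"
proof
  show "(A \<inter> B) #> h \<subseteq> (A #> h) \<inter> (B #> h)" by (auto simp: r_coset_def)
  show "(A #> h) \<inter> (B #> h) \<subseteq> (A \<inter> B) #> h"
  proof
    fix z assume "z \<in> (A #> h) \<inter> (B #> h)"
    then obtain a b where ab: "a \<in> A" "b \<in> B" "z = a \<otimes> h" "z = b \<otimes> h"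
      unfolding r_coset_def by blast
    have "a \<in> carrier G" "b \<in> carrier G" using ab assms by auto
    then have "a = b" using ab assms(3) r_cancel by metis
    then show "z \<in> (A \<inter> B) #> h" using ab unfolding r_coset_def by blast
  qed
qed

lemma (in group) sub_index_inter:
  assumes "subgroup K G" "finite K" "A \<subseteq> carrier G" "B \<subseteq> carrier G"
  shows "sub_index G K (A \<inter> B) \<le> sub_index G K A * sub_index G K B"
proof -
  have KG: "K \<subseteq> carrier G" using assms(1) subgroup.subset by blast
  define P where "P = (\<lambda>h. (A #> h, B #> h)) ` K"
  have P1: "P \<subseteq> {r_coset G A h | h. h \<in> K} \<times> {r_coset G B h | h. h \<in> K}"
    by (auto simp: P_def)
  have fin: "finite ({r_coset G A h | h. h \<in> K} \<times> {r_coset G B h | h. h \<in> K})"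
    using assms(2) by simp
  have "card P \<le> sub_index G K A * sub_index G K B"
    unfolding sub_index_def using card_mono[OF fin P1] by (simp add: card_cartesian_product)
  moreover have "{r_coset G (A \<inter> B) h | h. h \<in> K} = (\<lambda>(U, V). U \<inter> V) ` P"
  proof -
    have "{r_coset G (A \<inter> B) h | h. h \<in> K} = (\<lambda>h. (A \<inter> B) #> h) ` K" by auto
    also have "\<dots> = (\<lambda>h. (A #> h) \<inter> (B #> h)) ` K"
      using KG assms by (intro image_cong) (auto simp: rcos_inter)
    also have "\<dots> = (\<lambda>(U, V). U \<inter> V) ` P" by (simp add: P_def image_image)
    finally show ?thesis .
  qed
  moreover have "finite P" using assms(2) by (simp add: P_def)
  ultimately have "card {r_coset G (A \<inter> B) h | h. h \<in> K} \<le> card P"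
    using card_image_le by simp
  with \<open>card P \<le> _\<close> show ?thesis unfolding sub_index_def by linarith
qed

lemma (in group) short_word:
  assumes HG: "subgroup H G" and finH: "finite H" and YH: "Y \<subseteq> H"
    and Yinv: "\<And>x. x \<in> Y \<Longrightarrow> inv x \<in> Y" and ws: "set ws \<subseteq> Y"
    and mini: "\<And>vs. set vs \<subseteq> Y \<Longrightarrow> wprod G vs = wprod G ws \<Longrightarrow> length ws \<le> length vs"
  shows "(length ws div 3 + 1) * card Y \<le> card H"
proof -
  have HC: "H \<subseteq> carrier G" using HG subgroup.subset by blast
  have YC: "Y \<subseteq> carrier G" using YH HC by blast
  define L where "L = length ws"
  define p where "p i = wprod G (take i ws)" for i
  have pC: "p i \<in> carrier G" for i
    unfolding p_def using ws YC by (intro wprod_closed) (meson dual_order.trans set_take_subset)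
  have pH: "p i \<in> H" for i
    unfolding p_def using ws YH by (intro wprod_subgroup[OF HG]) (meson dual_order.trans set_take_subset)
  have key: False if ij: "i < j" "j \<le> L div 3" and ab: "a \<in> Y" "b \<in> Y"
    and eq: "p (3*i) \<otimes> a = p (3*j) \<otimes> b" for i j a b
  proof -
    have aC: "a \<in> carrier G" and bC: "b \<in> carrier G" using ab YC by auto
    define s where "s = wprod G (drop (3*j) ws)"
    have sdC: "set (drop (3*j) ws) \<subseteq> carrier G" using ws YC
      by (meson dual_order.trans set_drop_subset)
    have stC: "set (take k ws) \<subseteq> carrier G" for k using ws YC
      by (meson dual_order.trans set_take_subset)
    have sC: "s \<in> carrier G" unfolding s_def using sdC by (rule wprod_closed)
    define vs where "vs = take (3*i) ws @ [a, inv b] @ drop (3*j) ws"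
    have vsY: "set vs \<subseteq> Y" unfolding vs_def using ws ab Yinv
      by (auto dest: set_take_subset[THEN subsetD] set_drop_subset[THEN subsetD])
    have d3: "3*j \<le> L" using ij(2) by presburger
    have pj: "p (3*i) \<otimes> a \<otimes> inv b = p (3*j)"
    proof -
      have "p (3*i) \<otimes> a \<otimes> inv b = p (3*j) \<otimes> b \<otimes> inv b" using eq by simp
      also have "\<dots> = p (3*j)" using bC pC by (simp add: m_assoc)
      finally show ?thesis .
    qed
    have "wprod G vs = p (3*i) \<otimes> (a \<otimes> (inv b \<otimes> s))"
      unfolding vs_def p_def s_def
      using wprod_append[of "take (3*i) ws" "[a, inv b] @ drop (3*j) ws"] aC bC sdC stC
      by simp
    also have "\<dots> = (p (3*i) \<otimes> a \<otimes> inv b) \<otimes> s" using aC bC sC pC by (simp add: m_assoc)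
    also have "\<dots> = p (3*j) \<otimes> s" by (simp only: pj)
    also have "\<dots> = wprod G ws"
      unfolding p_def s_def using wprod_append[OF stC sdC, of "3*j"] by simp
    finally have "length ws \<le> length vs" using mini vsY by blast
    moreover have "length vs = 3*i + 2 + (L - 3*j)"
      unfolding vs_def L_def using d3 ij(1) by (simp add: L_def min_def)
    ultimately show False using ij d3 unfolding L_def by linarith
  qed
  define f where "f = (\<lambda>(i, a). p (3*i) \<otimes> a)"
  have inj: "inj_on f ({0..L div 3} \<times> Y)"
  proof (rule inj_onI, clarify)
    fix i a j b assume ia: "i \<in> {0..L div 3}" "a \<in> Y" and jb: "j \<in> {0..L div 3}" "b \<in> Y"
      and e: "f (i, a) = f (j, b)"
    then have e': "p (3*i) \<otimes> a = p (3*j) \<otimes> b" by (simp add: f_def)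
    show "i = j \<and> a = b"
    proof (cases i j rule: linorder_cases)
      case less then show ?thesis using key[OF less _ ia(2) jb(2) e'] jb by auto
    next
      case greater then show ?thesis using key[OF greater _ jb(2) ia(2) e'[symmetric]] ia by auto
    next
      case equal
      have "a = b" using e' pC[of "3*j"] ia(2) jb(2) YC equal by (metis l_cancel subsetD)
      then show ?thesis using equal by simp
    qed
  qed
  have img: "f ` ({0..L div 3} \<times> Y) \<subseteq> H"
    using pH YH subgroup.m_closed[OF HG] by (auto simp: f_def)
  have "card ({0..L div 3} \<times> Y) \<le> card H" by (rule card_inj_on_le[OF inj img finH])
  then show ?thesis by (simp add: card_cartesian_product L_def)
qed

lemma (in group) index_word:
  assumes KG: "subgroup K G" and finK: "finite K" and YC: "Y \<subseteq> carrier G"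
    and c: "\<And>x. x \<in> Y \<Longrightarrow> real (sub_index G K (centralizer_in G K x)) \<le> c"
    and ws: "set ws \<subseteq> Y"
  shows "real (sub_index G K (centralizer_in G K (wprod G ws))) \<le> c ^ length ws"
  using ws
proof (induction ws)
  case Nil
  have KC: "K \<subseteq> carrier G" using KG subgroup.subset by blast
  have "centralizer_in G K \<one> = K" using KC by (auto simp: centralizer_in_def)
  moreover have "card K > 0" using finK subgroup.one_closed[OF KG] card_gt_0_iff by blast
  ultimately have "sub_index G K (centralizer_in G K \<one>) = 1"
    using sub_index_mult[OF KG KG] by simp
  then show ?case by simp
next
  case (Cons a ws)
  have KC: "K \<subseteq> carrier G" using KG subgroup.subset by blast
  have aC: "a \<in> carrier G" using Cons YC by auto
  have wC: "wprod G ws \<in> carrier G" using Cons YC by (intro wprod_closed) auto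
  let ?A = "centralizer_in G K a" and ?B = "centralizer_in G K (wprod G ws)"
    and ?C = "centralizer_in G K (a \<otimes> wprod G ws)"
  have sA: "subgroup ?A G" and sB: "subgroup ?B G" using centralizer_subgroup KG aC wC by auto
  have sC: "subgroup ?C G" using centralizer_subgroup KG aC wC by auto
  have sAB: "subgroup (?A \<inter> ?B) G" using sA sB subgroups_Inter_pair by blast
  have sub: "?A \<inter> ?B \<subseteq> ?C"
  proof
    fix k assume "k \<in> ?A \<inter> ?B"
    then have k: "k \<in> K" "a \<otimes> k = k \<otimes> a" "wprod G ws \<otimes> k = k \<otimes> wprod G ws"
      by (auto simp: centralizer_in_def)
    have kC: "k \<in> carrier G" using k KC by auto
    have "(a \<otimes> wprod G ws) \<otimes> k = a \<otimes> (k \<otimes> wprod G ws)" using k aC wC kC by (simp add: m_assoc)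
    also have "\<dots> = k \<otimes> (a \<otimes> wprod G ws)" using k aC wC kC by (simp add: m_assoc[symmetric])
    finally show "k \<in> ?C" using k by (simp add: centralizer_in_def)
  qed
  have CK: "?C \<subseteq> K" by (auto simp: centralizer_in_def)
  have ABK: "?A \<inter> ?B \<subseteq> K" by (auto simp: centralizer_in_def)
  have e1: "sub_index G K ?C * card ?C = card K" by (rule sub_index_mult[OF KG sC CK])
  have e2: "sub_index G K (?A \<inter> ?B) * card (?A \<inter> ?B) = card K" by (rule sub_index_mult[OF KG sAB ABK])
  have c1: "card (?A \<inter> ?B) \<le> card ?C" using sub finK CK by (meson card_mono rev_finite_subset)
  have c0: "card (?A \<inter> ?B) > 0"
    using subgroup.one_closed[OF sAB] finK ABK card_gt_0_iff rev_finite_subset by blast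
  have "sub_index G K ?C \<le> sub_index G K (?A \<inter> ?B)"
  proof -
    have "sub_index G K ?C * card ?C \<le> sub_index G K (?A \<inter> ?B) * card ?C"
      using e1 e2 c1 by (metis mult_le_mono2)
    moreover have "card ?C > 0" using c0 c1 by linarith
    ultimately show ?thesis by simp
  qed
  also have "\<dots> \<le> sub_index G K ?A * sub_index G K ?B"
    using sub_index_inter[OF KG finK] subgroup.subset[OF sA] subgroup.subset[OF sB] by blast
  finally have "real (sub_index G K ?C) \<le> real (sub_index G K ?A) * real (sub_index G K ?B)"
    by (metis of_nat_le_iff of_nat_mult)
  also have "\<dots> \<le> c * c ^ length ws"
  proof -
    have "0 \<le> real (sub_index G K ?A)" by simp
    also have "\<dots> \<le> c" using c[of a] Cons.prems by simp
    finally have "0 \<le> c" .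
    then show ?thesis using Cons c by (intro mult_mono) auto
  qed
  finally show ?case by simp
qed

lemma (in group) main_aux:
  fixes H K :: "'a set" and \<epsilon> :: real
  assumes "True" and "finite (carrier G)"
    and "subgroup H G" and "subgroup K G"
    and "\<epsilon> > 0" and "comm_prob G H K \<ge> \<epsilon>"
  shows "\<exists>S \<subseteq> H.
           real (sub_index G H (generate G S)) \<le> 2 / \<epsilon> - 1
         \<and> (\<forall>x \<in> S. real (sub_index G K (centralizer_in G K x)) \<le> 2 / \<epsilon>)
         \<and> (\<forall>x \<in> generate G S.
              real (sub_index G K (centralizer_in G K x)) \<le> (2 / \<epsilon>) powr (6 / \<epsilon>))"
proof -
  note HG = assms(3) and KG = assms(4) and eps = assms(5)
  have HC: "H \<subseteq> carrier G" using HG subgroup.subset by blast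
  have KC: "K \<subseteq> carrier G" using KG subgroup.subset by blast
  have finH: "finite H" using HC assms(2) finite_subset by blast
  have finK: "finite K" using KC assms(2) finite_subset by blast
  have cH: "card H > 0" using finH subgroup.one_closed[OF HG] card_gt_0_iff by blast
  have cK: "card K > 0" using finK subgroup.one_closed[OF KG] card_gt_0_iff by blast
  define idx where "idx x = real (sub_index G K (centralizer_in G K x))" for x
  define Y where "Y = {x \<in> H. idx x \<le> 2 / \<epsilon>}"
  have CK: "centralizer_in G K x \<subseteq> K" for x by (auto simp: centralizer_in_def)
  have idx_eq: "idx x * real (card (centralizer_in G K x)) = real (card K)" if "x \<in> H" for x
  proof -
    have "subgroup (centralizer_in G K x) G" using centralizer_subgroup KG that HC by blast
    from sub_index_mult[OF KG this CK] show ?thesis unfolding idx_def by (metis of_nat_mult)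
  qed
  define f where "f x = real (card (centralizer_in G K x)) / real (card K)" for x
  have sig: "{(x, y). x \<in> H \<and> y \<in> K \<and> x \<otimes> y = y \<otimes> x} = Sigma H (centralizer_in G K)"
    by (auto simp: centralizer_in_def)
  then have "card {(x, y). x \<in> H \<and> y \<in> K \<and> x \<otimes> y = y \<otimes> x} = (\<Sum>x\<in>H. card (centralizer_in G K x))"
  proof -
    have "\<forall>a\<in>H. finite (centralizer_in G K a)" using finK CK rev_finite_subset by blast
    then show ?thesis unfolding sig using finH card_SigmaI by simp
  qed
  then have cp: "comm_prob G H K = (\<Sum>x\<in>H. real (card (centralizer_in G K x))) / (real (card H) * real (card K))"
    unfolding comm_prob_def by simp
  have sumf: "(\<Sum>x\<in>H. f x) = comm_prob G H K * real (card H)"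
    unfolding cp f_def using cH cK by (simp add: sum_divide_distrib[symmetric] field_simps)
  have f1: "f x \<le> 1" for x
    unfolding f_def using cK card_mono[OF finK CK, of x] by (simp add: divide_le_eq_1)
  have f2: "f x \<le> \<epsilon> / 2" if "x \<in> H - Y" for x
  proof -
    have xH: "x \<in> H" and big: "idx x > 2 / \<epsilon>" using that by (auto simp: Y_def)
    have ip: "idx x > 0" using big eps by (smt (verit) divide_pos_pos)
    have "f x = 1 / idx x" unfolding f_def using idx_eq[OF xH] ip cK
      by (simp add: field_simps)
    also have "\<dots> \<le> \<epsilon> / 2" using big eps ip by (simp add: field_simps)
    finally show ?thesis .
  qed
  have YH: "Y \<subseteq> H" by (auto simp: Y_def)
  have finY: "finite Y" using finH YH finite_subset by blast
  have "(\<Sum>x\<in>H. f x) = (\<Sum>x\<in>H - Y. f x) + (\<Sum>x\<in>Y. f x)"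
    using sum.subset_diff[OF YH finH] by simp
  also have "\<dots> \<le> (\<Sum>x\<in>H - Y. \<epsilon> / 2) + (\<Sum>x\<in>Y. 1)"
    using f1 f2 by (intro add_mono sum_mono) auto
  also have "\<dots> = (real (card H) - real (card Y)) * (\<epsilon> / 2) + real (card Y)"
    using card_Diff_subset[OF finY YH] card_mono[OF finH YH] by (simp add: of_nat_diff)
  finally have "\<epsilon> * real (card H) \<le> (real (card H) - real (card Y)) * (\<epsilon> / 2) + real (card Y)"
    using sumf assms(6) cH by (smt (verit) mult_right_mono of_nat_0_le_iff)
  then have key: "\<epsilon> * real (card H) \<le> (2 - \<epsilon>) * real (card Y)"
    by (simp add: algebra_simps)
  have eps2: "\<epsilon> < 2" and cY: "card Y > 0"
  proof -
    have "0 < \<epsilon> * real (card H)" using eps cH by simp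
    then have "0 < (2 - \<epsilon>) * real (card Y)" using key by linarith
    then show "\<epsilon> < 2" "card Y > 0"
      by (auto simp: zero_less_mult_iff)
  qed
  have YC: "Y \<subseteq> carrier G" using YH HC by blast
  have cinv: "centralizer_in G K (inv x) = centralizer_in G K x" if "x \<in> carrier G" for x
  proof -
    have "inv x \<otimes> k = k \<otimes> inv x \<longleftrightarrow> x \<otimes> k = k \<otimes> x" if "k \<in> K" for k
    proof -
      have kC: "k \<in> carrier G" using that KC by blast
      show ?thesis using kC \<open>x \<in> carrier G\<close>
        by (metis inv_closed inv_inv m_assoc m_closed inv_solve_left inv_solve_right)
    qed
    then show ?thesis by (auto simp: centralizer_in_def)
  qed
  have Yinv: "inv x \<in> Y" if "x \<in> Y" for x
    using that YC cinv[of x] subgroup.m_inv_closed[OF HG] by (auto simp: Y_def idx_def)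
  define H0 where "H0 = generate G Y"
  have H0G: "subgroup H0 G" unfolding H0_def using generate_is_subgroup[OF YC] .
  have H0H: "H0 \<subseteq> H" unfolding H0_def using generate_subgroup_incl[OF YH HG] .
  have YH0: "Y \<subseteq> H0" unfolding H0_def by (rule subsetI, rule generate.incl)
  have part1: "real (sub_index G H H0) \<le> 2 / \<epsilon> - 1"
  proof -
    have m: "sub_index G H H0 * card H0 = card H" using sub_index_mult[OF HG H0G H0H] .
    have "card Y \<le> card H0" using YH0 finH H0H by (meson card_mono rev_finite_subset)
    then have "real (sub_index G H H0) * real (card Y) \<le> real (card H)"
      using m by (metis of_nat_le_iff of_nat_mult mult_le_mono2)
    then have "real (sub_index G H H0) * real (card Y) * \<epsilon> \<le> (2 - \<epsilon>) * real (card Y)"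
      using key eps by (smt (verit) mult_right_mono mult.commute)
    then have "real (sub_index G H H0) * \<epsilon> \<le> 2 - \<epsilon>"
      using cY by (simp add: mult.commute mult.left_commute)
    then show ?thesis using eps by (simp add: field_simps)
  qed
  have part3: "idx g \<le> (2 / \<epsilon>) powr (6 / \<epsilon>)" if "g \<in> H0" for g
  proof -
    define P where "P n = (\<exists>ws. set ws \<subseteq> Y \<and> g = wprod G ws \<and> length ws = n)" for n
    have "\<exists>n. P n" using generate_words[OF YC Yinv] that unfolding H0_def P_def by blast
    then have "P (LEAST n. P n)" by (rule LeastI_ex)
    then obtain ws where ws: "set ws \<subseteq> Y" "g = wprod G ws" and len: "length ws = (LEAST n. P n)"
      unfolding P_def by blast
    have mini: "length ws \<le> length vs" if "set vs \<subseteq> Y" "wprod G vs = wprod G ws" for vs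
      unfolding len using that ws by (intro Least_le) (auto simp: P_def)
    have sw: "(length ws div 3 + 1) * card Y \<le> card H"
      by (rule short_word[OF HG finH YH Yinv ws(1) mini])
    define L where "L = length ws"
    have "real (L div 3 + 1) * real (card Y) * \<epsilon> \<le> (2 - \<epsilon>) * real (card Y)"
      using sw key eps unfolding L_def
      by (smt (verit) mult_right_mono mult.commute of_nat_le_iff of_nat_mult)
    then have a: "real (L div 3 + 1) * \<epsilon> \<le> 2 - \<epsilon>"
      using cY by (simp add: mult.commute mult.left_commute)
    have "L < 3 * (L div 3 + 1)" by simp
    then have "real L < 3 * real (L div 3 + 1)" by linarith
    then have "real L * \<epsilon> < 3 * real (L div 3 + 1) * \<epsilon>" using eps by simp
    also have "\<dots> \<le> 6" using a eps by linarith
    finally have Lb: "real L \<le> 6 / \<epsilon>" using eps by (simp add: field_simps)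
    have c1: "1 \<le> 2 / \<epsilon>" using eps eps2 by simp
    have "idx g \<le> (2 / \<epsilon>) ^ L"
      unfolding idx_def ws(2) L_def
      by (rule index_word[OF KG finK YC _ ws(1)]) (simp add: Y_def idx_def)
    also have "\<dots> = (2 / \<epsilon>) powr (real L)" using eps by (simp add: powr_realpow)
    also have "\<dots> \<le> (2 / \<epsilon>) powr (6 / \<epsilon>)" using Lb c1 by (rule powr_mono)
    finally show ?thesis .
  qed
  show ?thesis
    using YH part1 part3 unfolding H0_def idx_def by (intro exI[of _ Y]) (auto simp: Y_def idx_def)
qed

theorem lemma2p8:
  fixes G :: "('a, 'b) monoid_scheme" and H K :: "'a set" and \<epsilon> :: real
  assumes "group G" and "finite (carrier G)"
    and "subgroup H G" and "subgroup K G"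
    and "\<epsilon> > 0" and "comm_prob G H K \<ge> \<epsilon>"
  shows "\<exists>S \<subseteq> H.
           real (sub_index G H (generate G S)) \<le> 2 / \<epsilon> - 1
         \<and> (\<forall>x \<in> S. real (sub_index G K (centralizer_in G K x)) \<le> 2 / \<epsilon>)
         \<and> (\<forall>x \<in> generate G S.
              real (sub_index G K (centralizer_in G K x)) \<le> (2 / \<epsilon>) powr (6 / \<epsilon>))"
  using group.main_aux[OF assms(1) TrueI assms(2-6)] .

end
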